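(* Let $r>0$, assume $W$ satisfies (H), and let $u_0(x)=1$ for $x>0$, $u_0(x)=-1$ for $x<0$ (so $\mathcal{E}(u_0)=4/r$). If either $r\in\big(0,\frac{4}{4+c_W}\big)$, or $W$ is differentiable at $\pm1$, then there exists a monotone nondecreasing $v\in L^\infty(\mathbb{R})$ with $\lim_{x\to\pm\infty}v(x)=\pm1$ and $\mathcal{E}(v)<\mathcal{E}(u_0)$; in particular $u_0$ is not a minimizer of $\mathcal{E}$ among monotone nondecreasing functions connecting $-1$ to $1$.
   Context: For an interval $I$ and $u\in L^\infty(I)$, $\operatorname{osc}_I u:=\operatorname{ess\,sup}_I u-\operatorname{ess\,inf}_I u$. $\mathcal{E}(u):=\frac1{2r^2}\int_{\mathbb{R}}(\operatorname{osc}_{(x-r,x+r)}u)^2dx+\int_{\mathbb{R}}W(u(x))dx$. Assumption (H) on $W$: $W\in C(\mathbb{R})$, $W(-1)=W(1)=0<W(t)$ for $t\ne\pm1$; $W$ strictly decreasing on $(-\infty,-1)$, strictly increasing on $(1,+\infty)$; $W$ even on $[-1,1]$ with unique local maximum in $[-1,1]$ at $0$. $c_W:=\int_{-1}^1 W(s)\,ds$. *)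

theory Defs
  imports "HOL-Analysis.Analysis" "HOL-Probability.Essential_Supremum"
begin

definition ess_sup_on :: "real \<Rightarrow> real \<Rightarrow> (real \<Rightarrow> real) \<Rightarrow> ereal" where
  "ess_sup_on a b u = esssup (restrict_space lborel {a<..<b}) (\<lambda>x. ereal (u x))"

definition ess_inf_on :: "real \<Rightarrow> real \<Rightarrow> (real \<Rightarrow> real) \<Rightarrow> ereal" where
  "ess_inf_on a b u = - esssup (restrict_space lborel {a<..<b}) (\<lambda>x. - ereal (u x))"

(* osc_{(a,b)} u = ess sup - ess inf (finite for u in L^infinity) *)
definition osc_on :: "real \<Rightarrow> real \<Rightarrow> (real \<Rightarrow> real) \<Rightarrow> real" where
  "osc_on a b u = real_of_ereal (ess_sup_on a b u - ess_inf_on a b u)"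

definition energy :: "real \<Rightarrow> (real \<Rightarrow> real) \<Rightarrow> (real \<Rightarrow> real) \<Rightarrow> ennreal" where
  "energy r W u =
     ennreal (1 / (2 * r\<^sup>2)) * (\<integral>\<^sup>+ x. ennreal ((osc_on (x - r) (x + r) u)\<^sup>2) \<partial>lborel)
     + (\<integral>\<^sup>+ x. ennreal (W (u x)) \<partial>lborel)"

definition is_local_max_on :: "(real \<Rightarrow> real) \<Rightarrow> real set \<Rightarrow> real \<Rightarrow> bool" where
  "is_local_max_on W S t \<longleftrightarrow> t \<in> S \<and> (\<exists>\<delta>>0. \<forall>y\<in>S. \<bar>y - t\<bar> < \<delta> \<longrightarrow> W y \<le> W t)"

definition hypH :: "(real \<Rightarrow> real) \<Rightarrow> bool" where
  "hypH W \<longleftrightarrow>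
     continuous_on UNIV W \<and>
     W (-1) = 0 \<and> W 1 = 0 \<and> (\<forall>t. t \<noteq> -1 \<and> t \<noteq> 1 \<longrightarrow> W t > 0) \<and>
     strict_antimono_on {..<(-1)} W \<and> strict_mono_on {1<..} W \<and>
     (\<forall>t\<in>{-1..1}. W (-t) = W t) \<and>
     (\<forall>t\<in>{-1..1}. is_local_max_on W {-1..1} t \<longleftrightarrow> t = 0)"

definition c_W :: "(real \<Rightarrow> real) \<Rightarrow> real" where
  "c_W W = integral {-1..1} W"

definition u0 :: "real \<Rightarrow> real" where
  "u0 x = (if x > 0 then 1 else -1)"

end

theory Submission
  imports Defs
begin

lemma esssup_interval:
  fixes u :: "real \<Rightarrow> real"
  assumes ab: "a < b" and meas: "u \<in> borel_measurable lborel"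
    and le: "\<forall>x\<in>{a<..<b}. u x \<le> c" and ca: "a \<le> ca" "ca < da" "da \<le> b"
    and eq: "\<forall>x\<in>{ca<..<da}. u x = c"
  shows "esssup (restrict_space lborel {a<..<b}) (\<lambda>x. ereal (u x)) = ereal c"
proof -
  let ?M = "restrict_space lborel {a<..<b}"
  have m: "(\<lambda>x. ereal (u x)) \<in> borel_measurable ?M"
    using meas by (intro measurable_restrict_space1 borel_measurable_ereal) simp
  have up: "esssup ?M (\<lambda>x. ereal (u x)) \<le> ereal c"
    by (rule esssup_I[OF m]) (rule AE_I2, use le in auto)
  have "\<not> esssup ?M (\<lambda>x. ereal (u x)) < ereal c"
  proof
    assume lt: "esssup ?M (\<lambda>x. ereal (u x)) < ereal c"
    have "AE x in ?M. ereal (u x) \<le> esssup ?M (\<lambda>x. ereal (u x))" by (rule esssup_AE)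
    then have "AE x in ?M. x \<notin> {ca<..<da}"
      by eventually_elim (use lt eq in force)
    then have "AE x in lborel. x \<in> {a<..<b} \<longrightarrow> x \<notin> {ca<..<da}"
      by (subst (asm) AE_restrict_space_iff) auto
    then have "AE x in lborel. x \<notin> {ca<..<da}"
      by eventually_elim (use ca in auto)
    then have "emeasure lborel {ca<..<da} = 0"
      by (subst (asm) AE_iff_measurable[of "{ca<..<da}"]) auto
    then show False using ca by simp
  qed
  with up show ?thesis by simp
qed

lemma osc_interval:
  fixes u :: "real \<Rightarrow> real"
  assumes ab: "a < b" and meas: "u \<in> borel_measurable lborel"
    and bnd: "\<forall>x\<in>{a<..<b}. lo \<le> u x \<and> u x \<le> hi"
    and ca: "a \<le> ca" "ca < da" "da \<le> b" and eq1: "\<forall>x\<in>{ca<..<da}. u x = hi"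
    and cb: "a \<le> cb" "cb < db" "db \<le> b" and eq2: "\<forall>x\<in>{cb<..<db}. u x = lo"
  shows "osc_on a b u = hi - lo"
proof -
  have s: "ess_sup_on a b u = ereal hi"
    unfolding ess_sup_on_def using ab meas bnd ca eq1 by (intro esssup_interval) auto
  have "esssup (restrict_space lborel {a<..<b}) (\<lambda>x. ereal (- u x)) = ereal (- lo)"
    using ab meas bnd cb eq2 by (intro esssup_interval) auto
  then have i: "ess_inf_on a b u = ereal lo"
    unfolding ess_inf_on_def by simp
  show ?thesis unfolding osc_on_def s i by simp
qed

definition stepv :: "real \<Rightarrow> real \<Rightarrow> real \<Rightarrow> real" where
  "stepv r m x = (if x < 0 then -1 else if x < r then m else 1)"

lemma stepv_mono: "-1 < m \<Longrightarrow> m < 1 \<Longrightarrow> 0 < r \<Longrightarrow> mono (stepv r m)"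
  unfolding mono_def stepv_def by auto

lemma u0_mono: "mono u0"
  unfolding mono_def u0_def by auto

lemma osc_stepv:
  assumes r: "0 < r" and m: "-1 < m" "m < 1"
  shows "osc_on (x-r) (x+r) (stepv r m) =
     (if x \<le> -r then 0 else if x \<le> 0 then 1+m else if x < r then 2 else if x < 2*r then 1-m else 0)"
proof -
  have meas: "stepv r m \<in> borel_measurable lborel"
    using borel_measurable_mono[OF stepv_mono[OF m r]] by simp
  consider "x \<le> -r" | "-r < x" "x \<le> 0" | "0 < x" "x < r" | "r \<le> x" "x < 2*r" | "2*r \<le> x"
    by linarith
  then show ?thesis
  proof cases
    case 1
    have "osc_on (x-r) (x+r) (stepv r m) = -1 - -1"
      by (rule osc_interval[where ca="x-r" and da="x+r" and cb="x-r" and db="x+r"])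
         (use meas r 1 in \<open>auto simp: stepv_def\<close>)
    then show ?thesis using 1 by simp
  next
    case 2
    have "osc_on (x-r) (x+r) (stepv r m) = m - -1"
      by (rule osc_interval[where ca="0" and da="x+r" and cb="x-r" and db="0"])
         (use meas r m 2 in \<open>auto simp: stepv_def\<close>)
    then show ?thesis using 2 r by simp
  next
    case 3
    have "osc_on (x-r) (x+r) (stepv r m) = 1 - -1"
      by (rule osc_interval[where ca="r" and da="x+r" and cb="x-r" and db="0"])
         (use meas r m 3 in \<open>auto simp: stepv_def\<close>)
    then show ?thesis using 3 r by simp
  next
    case 4
    have "osc_on (x-r) (x+r) (stepv r m) = 1 - m"
      by (rule osc_interval[where ca="r" and da="x+r" and cb="x-r" and db="r"])
         (use meas r m 4 in \<open>auto simp: stepv_def\<close>)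
    then show ?thesis using 4 r by simp
  next
    case 5
    have "osc_on (x-r) (x+r) (stepv r m) = 1 - 1"
      by (rule osc_interval[where ca="x-r" and da="x+r" and cb="x-r" and db="x+r"])
         (use meas r m 5 in \<open>auto simp: stepv_def\<close>)
    then show ?thesis using 5 r by simp
  qed
qed

lemma osc_u0:
  assumes r: "0 < r"
  shows "osc_on (x-r) (x+r) u0 = (if -r < x \<and> x < r then 2 else 0)"
proof -
  have meas: "u0 \<in> borel_measurable lborel"
    using borel_measurable_mono[OF u0_mono] by simp
  consider "x \<le> -r" | "-r < x" "x < r" | "r \<le> x"
    by linarith
  then show ?thesis
  proof cases
    case 1
    have "osc_on (x-r) (x+r) u0 = -1 - -1"
      by (rule osc_interval[where ca="x-r" and da="x+r" and cb="x-r" and db="x+r"])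
         (use meas r 1 in \<open>auto simp: u0_def\<close>)
    then show ?thesis using 1 by simp
  next
    case 2
    have "osc_on (x-r) (x+r) u0 = 1 - -1"
      by (rule osc_interval[where ca="0" and da="x+r" and cb="x-r" and db="0"])
         (use meas r 2 in \<open>auto simp: u0_def\<close>)
    then show ?thesis using 2 by simp
  next
    case 3
    have "osc_on (x-r) (x+r) u0 = 1 - 1"
      by (rule osc_interval[where ca="x-r" and da="x+r" and cb="x-r" and db="x+r"])
         (use meas r 3 in \<open>auto simp: u0_def\<close>)
    then show ?thesis using 3 by simp
  qed
qed

lemma int_osc_stepv:
  assumes r: "0 < r" and m: "-1 < m" "m < 1"
  shows "(\<integral>\<^sup>+ x. ennreal ((osc_on (x - r) (x + r) (stepv r m))\<^sup>2) \<partial>lborel)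
       = ennreal (r * ((1+m)\<^sup>2 + 4 + (1-m)\<^sup>2))"
proof -
  have pt: "ennreal ((osc_on (x - r) (x + r) (stepv r m))\<^sup>2) =
      ennreal ((1+m)\<^sup>2) * indicator {-r<..0} x + ennreal 4 * indicator {0<..<r} x
      + ennreal ((1-m)\<^sup>2) * indicator {r..<2*r} x" for x
    using r by (simp add: osc_stepv[OF r m] indicator_def)
  have "(\<integral>\<^sup>+ x. ennreal ((osc_on (x - r) (x + r) (stepv r m))\<^sup>2) \<partial>lborel)
     = (\<integral>\<^sup>+ x. ennreal ((1+m)\<^sup>2) * indicator {-r<..0} x + ennreal 4 * indicator {0<..<r} x
      + ennreal ((1-m)\<^sup>2) * indicator {r..<2*r} x \<partial>lborel)"
    by (simp add: pt)
  also have "\<dots> = ennreal ((1+m)\<^sup>2) * emeasure lborel {-r<..0} + ennreal 4 * emeasure lborel {0<..<r}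
      + ennreal ((1-m)\<^sup>2) * emeasure lborel {r..<2*r}"
    by (simp add: nn_integral_add nn_integral_cmult_indicator)
  also have "\<dots> = ennreal ((1+m)\<^sup>2) * ennreal r + ennreal 4 * ennreal r + ennreal ((1-m)\<^sup>2) * ennreal r"
    using r by simp
  also have "\<dots> = ennreal (r * ((1+m)\<^sup>2 + 4 + (1-m)\<^sup>2))"
  proof -
    have a: "0 \<le> (1+m)\<^sup>2 * r" "0 \<le> 4 * r" "0 \<le> (1-m)\<^sup>2 * r" using r by auto
    have "ennreal ((1+m)\<^sup>2) * ennreal r + ennreal 4 * ennreal r + ennreal ((1-m)\<^sup>2) * ennreal r
       = ennreal ((1+m)\<^sup>2 * r) + ennreal (4 * r) + ennreal ((1-m)\<^sup>2 * r)"
      using r by (simp add: ennreal_mult[symmetric] ennreal_numeral[symmetric] del: ennreal_numeral)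
    also have "\<dots> = ennreal ((1+m)\<^sup>2 * r + 4 * r + (1-m)\<^sup>2 * r)"
      using a by (simp add: ennreal_plus[symmetric] del: ennreal_plus)
    finally show ?thesis by (simp add: algebra_simps)
  qed
  finally show ?thesis .
qed

lemma int_osc_u0:
  assumes r: "0 < r"
  shows "(\<integral>\<^sup>+ x. ennreal ((osc_on (x - r) (x + r) u0)\<^sup>2) \<partial>lborel) = ennreal (8 * r)"
proof -
  have pt: "ennreal ((osc_on (x - r) (x + r) u0)\<^sup>2) = ennreal 4 * indicator {-r<..<r} x" for x
    using r by (simp add: osc_u0[OF r] indicator_def)
  have "(\<integral>\<^sup>+ x. ennreal ((osc_on (x - r) (x + r) u0)\<^sup>2) \<partial>lborel)
     = ennreal 4 * emeasure lborel {-r<..<r}"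
    by (simp add: pt nn_integral_cmult_indicator)
  also have "\<dots> = ennreal (8 * r)"
    using r by (simp add: ennreal_mult[symmetric] ennreal_numeral[symmetric] del: ennreal_numeral)
  finally show ?thesis .
qed

lemma int_W_stepv:
  assumes r: "0 < r" and W: "W (-1) = 0" "W 1 = 0" "W m \<ge> 0"
  shows "(\<integral>\<^sup>+ x. ennreal (W (stepv r m x)) \<partial>lborel) = ennreal (r * W m)"
proof -
  have pt: "ennreal (W (stepv r m x)) = ennreal (W m) * indicator {0..<r} x" for x
    using W by (simp add: stepv_def indicator_def)
  show ?thesis using r W by (simp add: pt nn_integral_cmult_indicator ennreal_mult[symmetric] mult.commute)
qed

lemma int_W_u0:
  assumes W: "W (-1) = 0" "W 1 = 0"
  shows "(\<integral>\<^sup>+ x. ennreal (W (u0 x)) \<partial>lborel) = 0"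
proof -
  have "(\<lambda>x. ennreal (W (u0 x))) = (\<lambda>x. 0)" using W by (auto simp: u0_def)
  then show ?thesis by simp
qed

lemma exists_m_diff:
  assumes r: "0 < r" and H: "hypH W" and d: "W differentiable (at 1)"
  shows "\<exists>m. -1 < m \<and> m < 1 \<and> W m < (1 - m\<^sup>2) / r\<^sup>2"
proof -
  have W1: "W 1 = 0" and Wpos: "\<And>t. W t \<ge> 0" using H unfolding hypH_def
    by (auto, metis less_eq_real_def order_refl)
  obtain D where D: "(W has_real_derivative D) (at 1)"
    using d by (auto simp: real_differentiable_def)
  have "D = 0"
    by (rule DERIV_local_min[OF D, of 1]) (use W1 Wpos in auto)
  with D have lim: "((\<lambda>h. (W (1 + h) - W 1) / h) \<longlongrightarrow> 0) (at 0)"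
    using DERIV_D by blast
  have e: "0 < 1 / r\<^sup>2" using r by simp
  have "\<forall>\<^sub>F h in at 0. dist ((W (1 + h) - W 1) / h) 0 < 1 / r\<^sup>2"
    using tendstoD[OF lim e] .
  then obtain dl where dl: "dl > 0" and P: "\<And>h. h \<noteq> 0 \<Longrightarrow> dist h 0 < dl \<Longrightarrow> \<bar>W (1 + h) / h\<bar> < 1 / r\<^sup>2"
    unfolding eventually_at using W1 by auto
  define h where "h = - min (dl/2) 1"
  have h: "h < 0" "h \<ge> -1" "dist h 0 < dl" using dl by (auto simp: h_def)
  have "\<bar>W (1 + h) / h\<bar> < 1 / r\<^sup>2" by (rule P) (use h in auto)
  moreover have "W (1 + h) / (-h) \<le> \<bar>W (1 + h) / h\<bar>"
    using abs_ge_minus_self[of "W (1 + h) / h"] by simp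
  ultimately have "W (1 + h) / (-h) < 1 / r\<^sup>2" by linarith
  then have "W (1 + h) < (-h) / r\<^sup>2" using h r by (simp add: divide_simps mult.commute)
  also have "(-h) / r\<^sup>2 \<le> (1 - (1+h)\<^sup>2) / r\<^sup>2"
  proof -
    have "h * (h + 1) \<le> 0" using h by (intro mult_nonpos_nonneg) auto
    then have "-h \<le> 1 - (1+h)\<^sup>2" by (simp add: power2_eq_square algebra_simps)
    then show ?thesis by (intro divide_right_mono) auto
  qed
  finally show ?thesis using h by (intro exI[of _ "1+h"]) auto
qed

lemma exists_m_small:
  assumes r: "0 < r" and H: "hypH W" and c: "r < 4 / (4 + c_W W)"
  shows "\<exists>m. -1 < m \<and> m < 1 \<and> W m < (1 - m\<^sup>2) / r\<^sup>2"
proof (rule ccontr)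
  assume "\<not> ?thesis"
  then have ge: "\<And>m. -1 < m \<Longrightarrow> m < 1 \<Longrightarrow> W m \<ge> (1 - m\<^sup>2) / r\<^sup>2" by force
  have Wm1: "W (-1) = 0" and W1: "W 1 = 0" and cont: "continuous_on UNIV W"
    using H unfolding hypH_def by auto
  have ge2: "W m \<ge> (1 - m\<^sup>2) / r\<^sup>2" if "m \<in> {-1..1}" for m
  proof (cases "m = -1 \<or> m = 1")
    case True then show ?thesis using Wm1 W1 by auto
  next
    case False then show ?thesis using that ge by auto
  qed
  have int: "((\<lambda>m. (1 - m\<^sup>2) / r\<^sup>2) has_integral 4 / (3 * r\<^sup>2)) {-1..1}"
  proof -
    have "((\<lambda>m. (1 - m\<^sup>2) / r\<^sup>2) has_integral ((\<lambda>x. (x - x^3/3) / r\<^sup>2) 1 - (\<lambda>x. (x - x^3/3) / r\<^sup>2) (-1))) {-1..1}"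
      apply (rule fundamental_theorem_of_calculus)
       apply simp
      apply (subst has_real_derivative_iff_has_vector_derivative[symmetric])
      apply (rule derivative_eq_intros | simp)+
      using r apply simp
      using r apply (simp add: field_simps power2_eq_square)
      done
    then show ?thesis by (simp add: field_simps)
  qed
  have Wint: "W integrable_on {-1..1}"
    using cont by (intro integrable_continuous_interval) (auto intro: continuous_on_subset)
  have "4 / (3 * r\<^sup>2) \<le> c_W W"
    unfolding c_W_def by (rule has_integral_le[OF int integrable_integral[OF Wint]]) (use ge2 in auto)
  moreover have "0 < 4 / (3 * r\<^sup>2)" using r by simp
  ultimately have cpos: "0 < 4 + c_W W" by linarith
  have "r * (4 + c_W W) < 4" using c cpos by (simp add: field_simps)
  then have "r * 4 + r * (4 / (3 * r\<^sup>2)) < 4"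
  proof -
    have "r * (4 / (3 * r\<^sup>2)) \<le> r * c_W W"
      using \<open>4 / (3 * r\<^sup>2) \<le> c_W W\<close> r by (intro mult_left_mono) auto
    then show ?thesis using \<open>r * (4 + c_W W) < 4\<close> by (simp add: algebra_simps)
  qed
  then have "r * 4 + 4 / (3 * r) < 4" using r by (simp add: power2_eq_square)
  then have "12 * r * r + 4 < 12 * r" using r by (simp add: field_simps)
  moreover have "0 \<le> 3 * (2*r - 1)\<^sup>2" by simp
  ultimately show False by (simp add: power2_eq_square algebra_simps)
qed

theorem proposition1p2:
  fixes r :: real and W :: "real \<Rightarrow> real"
  assumes "r > 0" and "hypH W"
    and "r < 4 / (4 + c_W W) \<or> (W differentiable (at (-1)) \<and> W differentiable (at 1))"
  shows "\<exists>v :: real \<Rightarrow> real. mono v \<and> v \<in> borel_measurable lborel \<and>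
           (\<exists>B. \<forall>x. \<bar>v x\<bar> \<le> B) \<and>
           (v \<longlongrightarrow> 1) at_top \<and> (v \<longlongrightarrow> -1) at_bot \<and>
           energy r W v < energy r W u0"
proof -
  note r = \<open>r > 0\<close>
  obtain m where m: "-1 < m" "m < 1" and Wm: "W m < (1 - m\<^sup>2) / r\<^sup>2"
    using assms exists_m_diff exists_m_small by blast
  have Wm1: "W (-1) = 0" and W1: "W 1 = 0" and Wpos: "W m \<ge> 0"
    using \<open>hypH W\<close> m unfolding hypH_def by (auto intro: less_imp_le)
  let ?v = "stepv r m"
  have mono: "mono ?v" by (rule stepv_mono[OF m r])
  have meas: "?v \<in> borel_measurable lborel"
    using borel_measurable_mono[OF mono] by simp
  have bnd: "\<forall>x. \<bar>?v x\<bar> \<le> 1" using m by (auto simp: stepv_def)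
  have top: "(?v \<longlongrightarrow> 1) at_top"
  proof (rule tendsto_eventually)
    show "\<forall>\<^sub>F x in at_top. ?v x = 1"
      by (rule eventually_at_top_linorderI[of r]) (use r in \<open>auto simp: stepv_def\<close>)
  qed
  have bot: "(?v \<longlongrightarrow> -1) at_bot"
  proof (rule tendsto_eventually)
    show "\<forall>\<^sub>F x in at_bot. ?v x = -1"
      by (rule eventually_at_bot_linorderI[of "-1"]) (auto simp: stepv_def)
  qed
  have Ev: "energy r W ?v = ennreal (1 / (2 * r\<^sup>2)) * ennreal (r * ((1+m)\<^sup>2 + 4 + (1-m)\<^sup>2)) + ennreal (r * W m)"
    unfolding energy_def int_osc_stepv[OF r m] int_W_stepv[OF r Wm1 W1 Wpos] ..
  have Eu: "energy r W u0 = ennreal (1 / (2 * r\<^sup>2)) * ennreal (8 * r)"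
    unfolding energy_def int_osc_u0[OF r] int_W_u0[OF Wm1 W1] by simp
  have n1: "0 \<le> 1 / (2 * r\<^sup>2) * (r * ((1+m)\<^sup>2 + 4 + (1-m)\<^sup>2))" using r by simp
  have n2: "0 \<le> r * W m" using r Wpos by simp
  have Ev2: "energy r W ?v = ennreal (1 / (2 * r\<^sup>2) * (r * ((1+m)\<^sup>2 + 4 + (1-m)\<^sup>2)) + r * W m)"
    unfolding Ev using r n1 n2 by (simp add: ennreal_mult[symmetric] ennreal_plus[symmetric] del: ennreal_plus)
  have Eu2: "energy r W u0 = ennreal (1 / (2 * r\<^sup>2) * (8 * r))"
    unfolding Eu using r by (simp add: ennreal_mult[symmetric])
  have key: "1 / (2 * r\<^sup>2) * (r * ((1+m)\<^sup>2 + 4 + (1-m)\<^sup>2)) + r * W m < 1 / (2 * r\<^sup>2) * (8 * r)"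
  proof -
    have "r * W m < r * ((1 - m\<^sup>2) / r\<^sup>2)" using Wm r by (intro mult_strict_left_mono) auto
    moreover have "1 / (2 * r\<^sup>2) * (8 * r) - 1 / (2 * r\<^sup>2) * (r * ((1+m)\<^sup>2 + 4 + (1-m)\<^sup>2))
        = r * ((1 - m\<^sup>2) / r\<^sup>2)"
      using r by (simp add: field_simps power2_eq_square)
    ultimately show ?thesis by linarith
  qed
  have "energy r W ?v < energy r W u0"
    unfolding Ev2 Eu2 using key n1 n2 by (subst ennreal_less_iff) auto
  then show ?thesis using mono meas bnd top bot by blast
qed

end
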